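(* Let $\alpha>1$ and constants $0<c\le C$ and $c_0>0$. Consider, for each $N\ge2$, a number of tasks $K=K(N)\ge c_0N$ and test proportions ${\bm{p}}={\bm{p}}^{(N)}\in\Delta_K$ with $c\,k^{-\alpha}\le p_k\le C\,k^{-\alpha}$ for all $k\le K$. For the memorization model with $L_N({\bm{p}},{\bm{q}})=\sum_{k=1}^K p_k(1-q_k)^N$, $L^{\mathrm{same}}({\bm{p}})=L_N({\bm{p}},{\bm{p}})$ and $L^*({\bm{p}})=\min_{{\bm{q}}\in\Delta_K}L_N({\bm{p}},{\bm{q}})$, we have, as $N\to\infty$, $$L^{\mathrm{same}}({\bm{p}})=\Theta\!\left(N^{-1+\frac{1}{\alpha}}\right),\qquad L^*({\bm{p}})=\Theta\!\left(N^{-\alpha+1}\right),$$ where the implied constants depend only on $\alpha,c,C,c_0$.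
   Context: $\Delta_K=\{{\bm{r}}\in\mathbb{R}^K:{\bm{r}}\ge0,\ \sum_k r_k=1\}$. Memorization model: each of $K$ tasks is memorizing a unique atom; the test distribution is the mixture of the tasks with proportions ${\bm{p}}$; training uses $N$ i.i.d. samples from the mixture with proportions ${\bm{q}}$, and the error on task $k$ is $1$ if no training example from task $k$ was seen and $0$ otherwise, giving the expected test loss $L_N({\bm{p}},{\bm{q}})=\sum_k p_k(1-q_k)^N$. The paper states the hypotheses as $p_k=\Theta(k^{-\alpha})$ and $K=\Omega(N)$. *)

theory Defs
  imports "HOL-Analysis.Analysis"
begin

text \<open>Probability task_simplex on the task indices 1..K (values outside 1..K are irrelevant).\<close>
definition task_simplex :: "nat \<Rightarrow> (nat \<Rightarrow> real) set" where
  "task_simplex K = {r. (\<forall>k\<in>{1..K}. 0 \<le> r k) \<and> (\<Sum>k=1..K. r k) = 1}"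

definition L :: "nat \<Rightarrow> nat \<Rightarrow> (nat \<Rightarrow> real) \<Rightarrow> (nat \<Rightarrow> real) \<Rightarrow> real" where
  "L N K p q = (\<Sum>k=1..K. p k * (1 - q k) ^ N)"

definition L_same :: "nat \<Rightarrow> nat \<Rightarrow> (nat \<Rightarrow> real) \<Rightarrow> real" where
  "L_same N K p = L N K p p"

text \<open>Optimal loss: minimum (infimum, attained by compactness) over the task_simplex.\<close>
definition L_star :: "nat \<Rightarrow> nat \<Rightarrow> (nat \<Rightarrow> real) \<Rightarrow> real" where
  "L_star N K p = (INF q\<in>task_simplex K. L N K p q)"

end

theory Submission
  imports Defs
begin


lemma step_ineq:
  fixes \<alpha> x :: real
  assumes a: "\<alpha> > 1" and x: "x \<ge> 1"
  shows "(x+1) powr (-\<alpha>) \<le> (x powr (1-\<alpha>) - (x+1) powr (1-\<alpha>)) / (\<alpha>-1)"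
proof -
  have der: "\<And>t. x \<le> t \<Longrightarrow> t \<le> x+1 \<Longrightarrow> ((\<lambda>t. t powr (1-\<alpha>)) has_real_derivative (1-\<alpha>) * t powr (1-\<alpha>-1)) (at t)"
    using x by (auto intro!: derivative_eq_intros)
  obtain z where z: "x < z" "z < x+1" and eq: "(x+1) powr (1-\<alpha>) - x powr (1-\<alpha>) = (x+1-x) * ((1-\<alpha>) * z powr (1-\<alpha>-1))"
    using MVT2[of x "x+1", OF _ der] by auto
  have "(x+1) powr (-\<alpha>) \<le> z powr (-\<alpha>)"
    using z x a by (intro powr_mono2') auto
  then have "(\<alpha>-1) * (x+1) powr (-\<alpha>) \<le> (\<alpha>-1) * z powr (-\<alpha>)"
    using a by (intro mult_left_mono) auto
  also have "\<dots> = x powr (1-\<alpha>) - (x+1) powr (1-\<alpha>)" using eq by (simp add: algebra_simps)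
  finally show ?thesis using a by (simp add: field_simps)
qed

lemma tail_bound_gen:
  fixes \<alpha> :: real
  assumes a: "\<alpha> > 1" and m: "m \<ge> 1" and n: "n \<ge> m"
  shows "(\<Sum>k\<in>{m+1..n}. real k powr (-\<alpha>)) \<le> (real m powr (1-\<alpha>) - real n powr (1-\<alpha>)) / (\<alpha>-1)"
  using n
proof (induction n rule: dec_induct)
  case base
  then show ?case by simp
next
  case (step n)
  have "{m+1..Suc n} = insert (Suc n) {m+1..n}" using step.hyps by auto
  then have "(\<Sum>k\<in>{m+1..Suc n}. real k powr (-\<alpha>)) = real (Suc n) powr (-\<alpha>) + (\<Sum>k\<in>{m+1..n}. real k powr (-\<alpha>))"
    by simp
  also have "\<dots> \<le> (real n powr (1-\<alpha>) - real (Suc n) powr (1-\<alpha>)) / (\<alpha>-1) + (real m powr (1-\<alpha>) - real n powr (1-\<alpha>)) / (\<alpha>-1)"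
    using step_ineq[OF a, of "real n"] step m by (intro add_mono) (auto simp: add_ac)
  also have "\<dots> = (real m powr (1-\<alpha>) - real (Suc n) powr (1-\<alpha>)) / (\<alpha>-1)"
    by (simp add: add_divide_distrib[symmetric])
  finally show ?case .
qed

lemma tail_bound:
  fixes \<alpha> :: real
  assumes a: "\<alpha> > 1" and m: "m \<ge> 1"
  shows "(\<Sum>k\<in>{m+1..n}. real k powr (-\<alpha>)) \<le> real m powr (1-\<alpha>) / (\<alpha>-1)"
proof (cases "n \<ge> m")
  case True
  have "0 \<le> real n powr (1-\<alpha>) / (\<alpha>-1)" using a by simp
  moreover have "(real m powr (1-\<alpha>) - real n powr (1-\<alpha>)) / (\<alpha>-1) = real m powr (1-\<alpha>) / (\<alpha>-1) - real n powr (1-\<alpha>) / (\<alpha>-1)"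
    by (simp add: diff_divide_distrib)
  ultimately show ?thesis using tail_bound_gen[OF a m True] by linarith
next
  case False
  then show ?thesis using a by simp
qed

lemma ln_sum_bound: "(\<Sum>k=1..M. ln (real M / real k)) \<le> real M"
proof (induction M)
  case 0
  then show ?case by simp
next
  case (Suc M)
  show ?case
  proof (cases "M = 0")
    case True then show ?thesis by simp
  next
    case False
    have "(\<Sum>k=1..Suc M. ln (real (Suc M) / real k)) = (\<Sum>k=1..M. ln (real (Suc M) / real k))"
      by simp
    also have "\<dots> = (\<Sum>k=1..M. ln (real M / real k) + (ln (real (Suc M)) - ln (real M)))"
      using False by (intro sum.cong) (auto simp: ln_div)
    also have "\<dots> = (\<Sum>k=1..M. ln (real M / real k)) + real M * (ln (real (Suc M)) - ln (real M))"
      by (simp add: sum.distrib)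
    also have "real M * (ln (real (Suc M)) - ln (real M)) \<le> 1"
    proof -
      have e1: "ln ((1 + real M)/real M) = ln (1+real M) - ln (real M)" using False by (simp add: ln_div)
      have e2: "1 + 1 / real M = (1 + real M)/real M" using False by (simp add: field_simps)
      have "ln (real (Suc M)) - ln (real M) = ln (1 + 1 / real M)"
        using e1 e2 by simp
      also have "\<dots> \<le> 1 / real M" using False by (intro ln_add_one_self_le_self) auto
      finally show ?thesis using False by (simp add: field_simps)
    qed
    finally show ?thesis using Suc.IH by simp
  qed
qed

lemma tangent_pow:
  fixes s y :: real
  assumes s: "s > 0" and y: "y \<ge> 0"
  shows "s ^ N + real N * s ^ (N - 1) * (y - s) \<le> y ^ N"
proof -
  have "1 + real N * (y/s - 1) \<le> (1 + (y/s - 1)) ^ N"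
    using s y by (intro Bernoulli_inequality) simp
  then have "s^N * (1 + real N * (y/s - 1)) \<le> s^N * (y/s) ^ N"
    using s by (intro mult_left_mono) auto
  moreover have "s^N * (y/s)^N = y^N" using s by (simp add: power_divide)
  moreover have "s^N * (1 + real N * (y/s - 1)) = s ^ N + real N * s ^ (N - 1) * (y - s)"
  proof (cases N)
    case 0 then show ?thesis by simp
  next
    case (Suc n)
    then show ?thesis using s by (simp add: field_simps)
  qed
  ultimately show ?thesis by simp
qed

lemma exp_le_one_minus:
  fixes x :: real
  assumes "0 \<le> x" "x \<le> 1/2"
  shows "exp (-2*x) \<le> 1 - x"
proof -
  have "- x - 2 * x\<^sup>2 \<le> ln (1 - x)" by (rule ln_one_minus_pos_lower_bound[OF assms])
  moreover have "x*x \<le> x*(1/2)" using assms by (intro mult_left_mono) auto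
  then have "-2*x \<le> - x - 2 * x\<^sup>2" by (simp add: power2_eq_square)
  ultimately have "-2*x \<le> ln (1-x)" by linarith
  then have "exp (-2*x) \<le> exp (ln (1-x))" by simp
  also have "\<dots> = 1 - x" using assms by simp
  finally show ?thesis .
qed

lemma pow_le_exp:
  fixes q :: real
  assumes "q \<le> 1"
  shows "(1 - q) ^ N \<le> exp (- real N * q)"
proof -
  have "(1-q)^N \<le> exp (-q) ^ N"
    using assms by (intro power_mono) (auto simp: exp_ge_add_one_self[of "-q", simplified])
  also have "\<dots> = exp (- real N * q)" by (simp add: exp_of_nat_mult[symmetric])
  finally show ?thesis .
qed

lemma simplex_le1:
  assumes "q \<in> task_simplex K" "k \<in> {1..K}"
  shows "0 \<le> q k" "q k \<le> 1"
proof -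
  have nn: "\<forall>k\<in>{1..K}. 0 \<le> q k" and s: "(\<Sum>k=1..K. q k) = 1" using assms by (auto simp: task_simplex_def)
  show "0 \<le> q k" using nn assms by auto
  have "q k \<le> (\<Sum>k=1..K. q k)" using nn assms(2) by (intro member_le_sum) auto
  then show "q k \<le> 1" using s by simp
qed

lemma L_nonneg:
  assumes "q \<in> task_simplex K" "\<forall>k\<in>{1..K}. 0 \<le> p k"
  shows "0 \<le> L N K p q"
  unfolding L_def using assms simplex_le1[OF assms(1)] by (intro sum_nonneg) auto




lemma xexp_le: fixes y :: real assumes "y \<ge> 0" shows "y * exp (-y) \<le> 1"
proof -
  have "y \<le> exp y" using exp_ge_add_one_self[of y] by linarith
  then show ?thesis by (simp add: exp_minus field_simps)
qed

lemma same_upper: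
  fixes \<alpha> C :: real
  assumes a: "\<alpha> > 1" and Cp: "C > 0" and N: "N \<ge> 1" and p: "p \<in> task_simplex K"
    and pb: "\<forall>k\<in>{1..K}. p k \<le> C * real k powr (-\<alpha>)"
  shows "L_same N K p \<le> (1 + C * 2 powr (\<alpha>-1) / (\<alpha>-1)) * real N powr (-1+1/\<alpha>)"
proof -
  define x where "x = real N powr (1/\<alpha>)"
  have x1: "x \<ge> 1" unfolding x_def using N a by (intro ge_one_powr_ge_zero) auto
  define T where "T = nat \<lfloor>x\<rfloor>"
  have T1: "T \<ge> 1" unfolding T_def using x1 by linarith
  have Tx: "real T \<le> x" unfolding T_def using x1 by linarith
  have Tx2: "x/2 \<le> real T"
  proof -
    have e: "real T = of_int \<lfloor>x\<rfloor>" unfolding T_def using x1 by simp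
    have "of_int \<lfloor>x\<rfloor> > x - 1" by linarith
    moreover have "of_int \<lfloor>x\<rfloor> \<ge> (1::real)" using x1 by simp
    ultimately show ?thesis unfolding e by linarith
  qed
  have Npos: "real N > 0" using N by simp
  define f where "f k = p k * (1 - p k) ^ N" for k
  have f1: "f k \<le> 1 / real N" if k: "k \<in> {1..K}" for k
  proof -
    have p01: "0 \<le> p k" "p k \<le> 1" using simplex_le1[OF p k] by auto
    have "f k \<le> p k * exp (- real N * p k)"
      unfolding f_def using p01 by (intro mult_left_mono pow_le_exp) auto
    also have "\<dots> = (real N * p k) * exp (-(real N * p k)) / real N" using Npos by simp
    also have "\<dots> \<le> 1 / real N"
      using xexp_le[of "real N * p k"] p01 Npos by (intro divide_right_mono) auto
    finally show ?thesis .
  qed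
  have f2: "f k \<le> C * real k powr (-\<alpha>)" if k: "k \<in> {1..K}" for k
  proof -
    have p01: "0 \<le> p k" "p k \<le> 1" using simplex_le1[OF p k] by auto
    have "f k \<le> p k * 1"
      unfolding f_def using p01 by (intro mult_left_mono power_le_one) auto
    moreover have "p k \<le> C * real k powr (-\<alpha>)" using pb k by blast
    ultimately show ?thesis by simp
  qed
  have "L_same N K p = sum f {1..K}" unfolding L_same_def L_def f_def by simp
  also have "\<dots> = sum f ({1..K} \<inter> {..T}) + sum f ({1..K} - {..T})"
    by (rule sum.Int_Diff) simp
  also have "sum f ({1..K} \<inter> {..T}) \<le> real (card ({1..K} \<inter> {..T})) * (1 / real N)"
    using f1 by (intro sum_bounded_above) auto
  also have "\<dots> \<le> real T * (1 / real N)"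
  proof -
    have "{1..K} \<inter> {..T} \<subseteq> {1..T}" by auto
    then have "card ({1..K} \<inter> {..T}) \<le> T" using card_mono[of "{1..T}"] by fastforce
    then show ?thesis using Npos by (intro mult_right_mono) auto
  qed
  also have "sum f ({1..K} - {..T}) \<le> (\<Sum>k\<in>{T+1..K}. C * real k powr (-\<alpha>))"
  proof -
    have "{1..K} - {..T} = {T+1..K}" using T1 by auto
    then show ?thesis using f2 by (auto intro!: sum_mono)
  qed
  also have "\<dots> = C * (\<Sum>k\<in>{T+1..K}. real k powr (-\<alpha>))" by (simp add: sum_distrib_left)
  also have "\<dots> \<le> C * (real T powr (1-\<alpha>) / (\<alpha>-1))"
    using tail_bound[OF a T1] Cp by (intro mult_left_mono) auto
  also have "real T * (1 / real N) \<le> real N powr (-1+1/\<alpha>)"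
  proof -
    have "real T * (1 / real N) \<le> x / real N" using Tx Npos by (simp add: divide_right_mono)
    also have "\<dots> = real N powr (-1+1/\<alpha>)"
    proof -
      have "real N powr (1/\<alpha> - 1) = real N powr (1/\<alpha>) / real N powr 1" by (rule powr_diff)
      moreover have "(1/\<alpha> - 1) = -1+1/\<alpha>" by simp
      ultimately show ?thesis unfolding x_def using Npos by (metis powr_one of_nat_0_le_iff)
    qed
    finally show ?thesis .
  qed
  finally have main: "L_same N K p \<le> real N powr (-1+1/\<alpha>) + C * (real T powr (1-\<alpha>) / (\<alpha>-1))" by simp
  have Tb: "real T powr (1-\<alpha>) \<le> 2 powr (\<alpha>-1) * real N powr (-1+1/\<alpha>)"
  proof -
    have "real T powr (1-\<alpha>) \<le> (x/2) powr (1-\<alpha>)"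
      using Tx2 x1 a by (intro powr_mono2') auto
    also have "\<dots> = x powr (1-\<alpha>) * 2 powr (\<alpha>-1)"
    proof -
      have "(x/2) powr (1-\<alpha>) = x powr (1-\<alpha>) / 2 powr (1-\<alpha>)" by (rule powr_divide)
      moreover have "2 powr (1-\<alpha>) = inverse (2 powr (\<alpha>-1))" using powr_minus[of 2 "\<alpha>-1"] by simp
      ultimately show ?thesis by (metis divide_inverse inverse_inverse_eq)
    qed
    also have "x powr (1-\<alpha>) = real N powr (-1+1/\<alpha>)"
    proof -
      have "1/\<alpha> * (1-\<alpha>) = -1+1/\<alpha>" using a by (simp add: field_simps)
      then show ?thesis unfolding x_def by (simp add: powr_powr)
    qed
    finally show ?thesis by (simp add: mult.commute)
  qed
  have "C * (real T powr (1-\<alpha>) / (\<alpha>-1)) \<le> C * (2 powr (\<alpha>-1) * real N powr (-1+1/\<alpha>) / (\<alpha>-1))"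
    using Tb a Cp by (intro mult_left_mono divide_right_mono) auto
  with main show ?thesis by (simp add: distrib_right)
qed




lemma same_lower:
  fixes \<alpha> c C :: real
  assumes a: "\<alpha> > 1" and cp: "c > 0" and cC: "c \<le> C" and N: "N \<ge> 2" and p: "p \<in> task_simplex K"
    and pb: "\<forall>k\<in>{1..K}. c * real k powr (-\<alpha>) \<le> p k \<and> p k \<le> C * real k powr (-\<alpha>)"
    and x1: "(C * real N) powr (1/\<alpha>) \<ge> 1"
    and xK: "2 * ((C * real N) powr (1/\<alpha>) + 1) \<le> real K"
  shows "c * exp (-2) * 2 powr (-\<alpha>) * (2 * (C * real N) powr (1/\<alpha>)) powr (1-\<alpha>) \<le> L_same N K p"
proof -
  define x where "x = (C * real N) powr (1/\<alpha>)"
  have x1': "x \<ge> 1" using x1 x_def by simp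
  define T where "T = nat \<lceil>x\<rceil>"
  have Tx: "real T \<ge> x" unfolding T_def using x1' by linarith
  have Tx2: "real T \<le> x + 1" unfolding T_def using x1' by linarith
  have T1: "T \<ge> 1" using Tx x1' by linarith
  have "real (2 * T) \<le> real K" using xK Tx2 unfolding x_def[symmetric] by simp
  then have T2K: "2 * T \<le> K" by linarith
  have Npos: "real N > 0" using N by simp
  have Cp: "C > 0" using cp cC by simp
  have xa: "x powr (-\<alpha>) = 1 / (C * real N)"
  proof -
    have "x powr (-\<alpha>) = (C * real N) powr (1/\<alpha> * (-\<alpha>))" unfolding x_def by (simp add: powr_powr)
    also have "1/\<alpha> * (-\<alpha>) = -1" using a by simp
    finally show ?thesis using Cp Npos by (simp add: powr_minus divide_inverse)
  qed
  define f where "f k = p k * (1 - p k) ^ N" for k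
  have fnn: "f k \<ge> 0" if "k \<in> {1..K}" for k
    using simplex_le1[OF p that] unfolding f_def by simp
  have expN: "exp (-2) \<le> (1 - 1 / real N) ^ N"
  proof -
    have "exp (-2 * (1 / real N)) \<le> 1 - 1 / real N"
      using N by (intro exp_le_one_minus) auto
    then have "exp (-2 * (1 / real N)) ^ N \<le> (1 - 1 / real N) ^ N"
      by (intro power_mono) auto
    moreover have "exp (-2 * (1 / real N)) ^ N = exp (-2)"
      using Npos by (simp add: exp_of_nat_mult[symmetric])
    ultimately show ?thesis by simp
  qed
  have fb: "c * (2 * real T) powr (-\<alpha>) * exp (-2) \<le> f k" if k: "k \<in> {T..2*T}" for k
  proof -
    have kK: "k \<in> {1..K}" using k T1 T2K by auto
    have p01: "0 \<le> p k" "p k \<le> 1" using simplex_le1[OF p kK] by auto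
    have kpos: "real k > 0" using kK by simp
    have "p k \<le> C * real k powr (-\<alpha>)" using pb kK by blast
    also have "\<dots> \<le> C * x powr (-\<alpha>)"
      using k Tx x1' Cp a by (intro mult_left_mono powr_mono2') auto
    also have "\<dots> = 1 / real N" using xa Cp by simp
    finally have pN: "p k \<le> 1 / real N" .
    have "exp (-2) \<le> (1 - p k) ^ N"
    proof -
      have "0 \<le> 1 - 1 / real N" using N by simp
      then have "(1 - 1 / real N) ^ N \<le> (1 - p k) ^ N" using pN by (intro power_mono) auto
      then show ?thesis using expN by linarith
    qed
    moreover have "c * (2 * real T) powr (-\<alpha>) \<le> p k"
    proof -
      have "c * (2 * real T) powr (-\<alpha>) \<le> c * real k powr (-\<alpha>)"
        using k kpos cp a by (intro mult_left_mono powr_mono2') auto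
      then show ?thesis using pb kK by fastforce
    qed
    ultimately show ?thesis unfolding f_def
      using cp p01 by (intro mult_mono) auto
  qed
  have "real (card {T..2*T}) * (c * (2 * real T) powr (-\<alpha>) * exp (-2)) \<le> sum f {T..2*T}"
    using fb by (intro sum_bounded_below) auto
  moreover have "real T \<le> real (card {T..2*T})" by simp
  moreover have "sum f {T..2*T} \<le> sum f {1..K}"
    using fnn T1 T2K by (intro sum_mono2) auto
  ultimately have low: "real T * (c * (2 * real T) powr (-\<alpha>) * exp (-2)) \<le> L_same N K p"
    unfolding L_same_def L_def f_def
    by (smt (verit) cp mult_right_mono exp_gt_zero powr_ge_zero mult_nonneg_nonneg)
  have "real T * (c * (2 * real T) powr (-\<alpha>) * exp (-2)) = c * exp (-2) * 2 powr (-\<alpha>) * (real T * real T powr (-\<alpha>))"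
    by (simp add: powr_mult)
  also have "real T * real T powr (-\<alpha>) = real T powr (1-\<alpha>)"
  proof -
    have "real T powr (1 + -\<alpha>) = real T powr 1 * real T powr (-\<alpha>)" by (rule powr_add)
    then show ?thesis using T1 by simp
  qed
  finally have e: "real T * (c * (2 * real T) powr (-\<alpha>) * exp (-2)) = c * exp (-2) * 2 powr (-\<alpha>) * real T powr (1-\<alpha>)" .
  have "(2 * x) powr (1-\<alpha>) \<le> real T powr (1-\<alpha>)"
    using Tx Tx2 x1' a T1 by (intro powr_mono2') auto
  then have "c * exp (-2) * 2 powr (-\<alpha>) * (2 * x) powr (1-\<alpha>) \<le> c * exp (-2) * 2 powr (-\<alpha>) * real T powr (1-\<alpha>)"
    using cp by (intro mult_left_mono) auto
  then show ?thesis using low e unfolding x_def by simp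
qed




lemma simplex_nonempty: "K \<ge> 1 \<Longrightarrow> (\<lambda>k. if k = 1 then 1 else 0) \<in> task_simplex K"
  unfolding task_simplex_def by auto

lemma star_lower:
  fixes \<alpha> c d :: real
  assumes a: "\<alpha> > 1" and cp: "c > 0" and N: "N \<ge> 1" and p: "p \<in> task_simplex K"
    and pb: "\<forall>k\<in>{1..K}. c * real k powr (-\<alpha>) \<le> p k"
    and d: "0 < d" and Kp2: "min K N \<ge> 2" and KpN: "real (min K N) \<ge> d * real N"
  shows "c * exp (-2/d) * real N powr (1-\<alpha>) \<le> L_star N K p"
  unfolding L_star_def
proof (rule cINF_greatest)
  show "task_simplex K \<noteq> {}" using simplex_nonempty[of K] Kp2 by auto
next
  fix q assume q: "q \<in> task_simplex K"
  define Kp where "Kp = min K N"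
  have Kp2': "Kp \<ge> 2" using Kp2 Kp_def by simp
  have KpK: "Kp \<le> K" and KpN': "Kp \<le> N" unfolding Kp_def by auto
  have Kpr: "real Kp > 0" using Kp2' by simp
  define s where "s = 1 - 1 / real Kp"
  have s0: "s > 0" unfolding s_def using Kp2' by (simp add: field_simps)
  have q01: "0 \<le> q k" "q k \<le> 1" if "k \<in> {1..K}" for k using simplex_le1[OF q that] by auto
  have p0: "0 \<le> p k" if "k \<in> {1..K}" for k using simplex_le1[OF p that] by auto
  have h1: "(\<Sum>k=1..Kp. p k * (1 - q k) ^ N) \<le> L N K p q"
    unfolding L_def using KpK q01 p0 by (intro sum_mono2) auto
  have h2: "(\<Sum>k=1..Kp. c * real Kp powr (-\<alpha>) * (1 - q k) ^ N) \<le> (\<Sum>k=1..Kp. p k * (1 - q k) ^ N)"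
  proof (intro sum_mono mult_right_mono)
    fix k assume k: "k \<in> {1..Kp}"
    then have kK: "k \<in> {1..K}" using KpK by auto
    have "c * real Kp powr (-\<alpha>) \<le> c * real k powr (-\<alpha>)"
      using k cp a by (intro mult_left_mono powr_mono2') auto
    then show "c * real Kp powr (-\<alpha>) \<le> p k" using pb kK by fastforce
    show "0 \<le> (1 - q k) ^ N" using q01[OF kK] by simp
  qed
  have sumq: "(\<Sum>k=1..Kp. q k) \<le> 1"
  proof -
    have "(\<Sum>k=1..Kp. q k) \<le> (\<Sum>k=1..K. q k)" using KpK q01 by (intro sum_mono2) auto
    then show ?thesis using q unfolding task_simplex_def by simp
  qed
  have tang: "real Kp * s ^ N \<le> (\<Sum>k=1..Kp. (1 - q k) ^ N)"
  proof -
    have "(\<Sum>k=1..Kp. s ^ N + real N * s ^ (N - 1) * ((1 - q k) - s)) \<le> (\<Sum>k=1..Kp. (1 - q k) ^ N)"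
      using KpK q01 s0 by (intro sum_mono tangent_pow) auto
    moreover have "(\<Sum>k=1..Kp. s ^ N + real N * s ^ (N - 1) * ((1 - q k) - s))
        = real Kp * s ^ N + real N * s ^ (N - 1) * (real Kp * (1 - s) - (\<Sum>k=1..Kp. q k))"
      by (simp add: sum.distrib sum_distrib_left[symmetric] sum_distrib_right[symmetric] sum_subtractf algebra_simps)
    moreover have "real Kp * (1 - s) = 1" unfolding s_def using Kpr by simp
    moreover have "0 \<le> real N * s ^ (N - 1) * (1 - (\<Sum>k=1..Kp. q k))"
      using sumq s0 by simp
    ultimately show ?thesis by simp
  qed
  have "c * exp (-2/d) * real N powr (1-\<alpha>) \<le> c * real Kp powr (-\<alpha>) * (real Kp * s ^ N)"
  proof -
    have e1: "real Kp powr (-\<alpha>) * real Kp = real Kp powr (1-\<alpha>)"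
    proof -
      have "real Kp powr (1 + -\<alpha>) = real Kp powr 1 * real Kp powr (-\<alpha>)" by (rule powr_add)
      then show ?thesis using Kpr by simp
    qed
    have e2: "real N powr (1-\<alpha>) \<le> real Kp powr (1-\<alpha>)"
      using KpN' Kpr a by (intro powr_mono2') auto
    have e3: "exp (-2/d) \<le> s ^ N"
    proof -
      have "exp (-2 * (1 / real Kp)) \<le> s" unfolding s_def
        using Kp2' by (intro exp_le_one_minus) auto
      then have "exp (-2 * (1 / real Kp)) ^ N \<le> s ^ N" by (intro power_mono) auto
      moreover have "exp (-2 * (1 / real Kp)) ^ N = exp (- 2 * (real N / real Kp))"
        by (simp add: exp_of_nat_mult[symmetric])
      moreover have "real N / real Kp \<le> 1 / d"
        using KpN d Kpr unfolding Kp_def[symmetric] by (simp add: field_simps)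
      then have "exp (-2/d) \<le> exp (- 2 * (real N / real Kp))" by simp
      ultimately show ?thesis by linarith
    qed
    have "c * exp (-2/d) * real N powr (1-\<alpha>) \<le> c * s ^ N * real Kp powr (1-\<alpha>)"
    proof -
      have "exp (-2/d) * real N powr (1-\<alpha>) \<le> s ^ N * real Kp powr (1-\<alpha>)"
        using e2 e3 s0 by (intro mult_mono) auto
      then show ?thesis using cp by (simp add: mult.assoc)
    qed
    also have "\<dots> = c * real Kp powr (-\<alpha>) * (real Kp * s ^ N)" using e1 by (simp add: algebra_simps)
    finally show ?thesis .
  qed
  also have "\<dots> \<le> c * real Kp powr (-\<alpha>) * (\<Sum>k=1..Kp. (1 - q k) ^ N)"
    using tang cp by (intro mult_left_mono) auto
  also have "\<dots> = (\<Sum>k=1..Kp. c * real Kp powr (-\<alpha>) * (1 - q k) ^ N)" by (simp add: sum_distrib_left)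
  finally show "c * exp (-2/d) * real N powr (1-\<alpha>) \<le> L N K p q"
    using h1 h2 by linarith
qed




lemma star_upper:
  fixes \<alpha> C :: real
  assumes a: "\<alpha> > 1" and Cp: "C > 0" and N: "N \<ge> 1" and K1: "K \<ge> 1" and p: "p \<in> task_simplex K"
    and pb: "\<forall>k\<in>{1..K}. p k \<le> C * real k powr (-\<alpha>)"
    and M1: "M \<ge> 1" and MN: "(\<alpha>+1) * real M \<le> real N"
  shows "L_star N K p \<le> C * (exp (-1) + 1/(\<alpha>-1)) * real M powr (1-\<alpha>)"
proof -
  have Npos: "real N > 0" using N by simp
  have Mpos: "real M > 0" using M1 by simp
  define base where "base k = (\<alpha> * ln (real M / real k) + 1) / real N" for k
  define h where "h k = (if k \<le> M then base k else 0)" for k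
  define S where "S = (\<Sum>k=1..K. h k)"
  define r where "r = 1 - S"
  define q where "q k = h k + (if k = 1 then r else 0)" for k
  have base0: "0 \<le> base k" if "1 \<le> k" "k \<le> M" for k
  proof -
    have "1 \<le> real M / real k" using that by simp
    then have "0 \<le> ln (real M / real k)" by simp
    then show ?thesis unfolding base_def using a Npos by simp
  qed
  have h0: "0 \<le> h k" if "1 \<le> k" for k unfolding h_def using base0 that by simp
  have "S = (\<Sum>k\<in>{k\<in>{1..K}. k \<le> M}. base k)"
    unfolding S_def h_def by (subst sum.inter_filter) auto
  also have "\<dots> \<le> (\<Sum>k=1..M. base k)"
    using base0 by (intro sum_mono2) auto
  also have "(\<Sum>k=1..M. base k) = (\<alpha> * (\<Sum>k=1..M. ln (real M / real k)) + real M) / real N"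
    unfolding base_def by (simp add: sum_divide_distrib[symmetric] sum.distrib sum_distrib_left)
  also have "\<dots> \<le> (\<alpha> * real M + real M) / real N"
    using ln_sum_bound[of M] a Npos by (intro divide_right_mono add_mono mult_left_mono) auto
  also have "\<dots> \<le> 1" using MN Npos by (simp add: algebra_simps)
  finally have S1: "S \<le> 1" .
  have r0: "r \<ge> 0" unfolding r_def using S1 by simp
  have qS: "q \<in> task_simplex K"
  proof -
    have "\<forall>k\<in>{1..K}. 0 \<le> q k" unfolding q_def using h0 r0 by auto
    moreover have "(\<Sum>k=1..K. q k) = S + r"
      unfolding q_def S_def using K1 by (simp add: sum.distrib)
    ultimately show ?thesis unfolding task_simplex_def r_def by simp
  qed
  define g where "g k = (if k \<le> M then C * exp (-1) * real M powr (-\<alpha>) else C * real k powr (-\<alpha>))" for k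
  have termb: "p k * (1 - q k) ^ N \<le> g k" if k: "k \<in> {1..K}" for k
  proof -
    have p01: "0 \<le> p k" "p k \<le> 1" using simplex_le1[OF p k] by auto
    have q1: "q k \<le> 1" using simplex_le1[OF qS k] by auto
    have hq: "h k \<le> q k" unfolding q_def using r0 by simp
    have kpos: "real k > 0" using k by simp
    have "p k * (1 - q k) ^ N \<le> p k * exp (- real N * q k)"
      using p01 q1 by (intro mult_left_mono pow_le_exp) auto
    also have "\<dots> \<le> p k * exp (- real N * h k)"
      using p01 hq Npos by (intro mult_left_mono) auto
    also have "\<dots> \<le> g k"
    proof (cases "k \<le> M")
      case True
      have "- real N * h k = -1 + (-\<alpha>) * ln (real M / real k)"
        unfolding h_def base_def using True Npos by (simp add: field_simps)
      then have "exp (- real N * h k) = exp (-1) * (real M / real k) powr (-\<alpha>)"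
        using Mpos kpos by (simp add: exp_add[symmetric] exp_diff powr_def)
      also have "\<dots> = exp (-1) * real M powr (-\<alpha>) / real k powr (-\<alpha>)"
        by (simp add: powr_divide)
      finally have e: "exp (- real N * h k) = exp (-1) * real M powr (-\<alpha>) / real k powr (-\<alpha>)" .
      have "p k * exp (- real N * h k) \<le> C * real k powr (-\<alpha>) * (exp (-1) * real M powr (-\<alpha>) / real k powr (-\<alpha>))"
        unfolding e using pb k by (intro mult_right_mono) auto
      also have "\<dots> = g k" unfolding g_def using True kpos by simp
      finally show ?thesis .
    next
      case False
      then show ?thesis unfolding g_def h_def using pb k by auto
    qed
    finally show ?thesis .
  qed
  have "L N K p q \<le> (\<Sum>k=1..K. g k)" unfolding L_def using termb by (intro sum_mono) auto
  also have "(\<Sum>k=1..K. g k) = (\<Sum>k\<in>{1..K} \<inter> {k. k \<le> M}. C * exp (-1) * real M powr (-\<alpha>))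
      + (\<Sum>k\<in>{1..K} \<inter> - {k. k \<le> M}. C * real k powr (-\<alpha>))"
    unfolding g_def by (rule sum.If_cases) simp
  also have "(\<Sum>k\<in>{1..K} \<inter> {k. k \<le> M}. C * exp (-1) * real M powr (-\<alpha>)) \<le> real M * (C * exp (-1) * real M powr (-\<alpha>))"
  proof -
    have "card ({1..K} \<inter> {k. k \<le> M}) \<le> M"
      using card_mono[of "{1..M}" "{1..K} \<inter> {k. k \<le> M}"] by fastforce
    then show ?thesis using Cp by (simp add: mult_right_mono)
  qed
  also have "(\<Sum>k\<in>{1..K} \<inter> - {k. k \<le> M}. C * real k powr (-\<alpha>)) = C * (\<Sum>k\<in>{M+1..K}. real k powr (-\<alpha>))"
  proof -
    have "{1..K} \<inter> - {k. k \<le> M} = {M+1..K}" using M1 by auto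
    then show ?thesis by (simp add: sum_distrib_left)
  qed
  also have "\<dots> \<le> C * (real M powr (1-\<alpha>) / (\<alpha>-1))"
    using tail_bound[OF a M1] Cp by (intro mult_left_mono) auto
  finally have Lq: "L N K p q \<le> real M * (C * exp (-1) * real M powr (-\<alpha>)) + C * (real M powr (1-\<alpha>) / (\<alpha>-1))" by simp
  have eM: "real M * real M powr (-\<alpha>) = real M powr (1-\<alpha>)"
  proof -
    have "real M powr (1 + -\<alpha>) = real M powr 1 * real M powr (-\<alpha>)" by (rule powr_add)
    then show ?thesis using Mpos by simp
  qed
  have "L_star N K p \<le> L N K p q"
    unfolding L_star_def
  proof (rule cINF_lower[OF _ qS])
    show "bdd_below ((L N K p) ` task_simplex K)"
      by (rule bdd_belowI2[where m = 0]) (use L_nonneg simplex_le1[OF p] in auto)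
  qed
  also have "\<dots> \<le> C * (exp (-1) + 1/(\<alpha>-1)) * real M powr (1-\<alpha>)"
  proof -
    have "real M * (C * exp (-1) * real M powr (-\<alpha>)) = C * exp (-1) * (real M * real M powr (-\<alpha>))"
      by (simp add: ac_simps)
    also have "\<dots> = C * exp (-1) * real M powr (1-\<alpha>)" using eM by simp
    finally have "L N K p q \<le> C * exp (-1) * real M powr (1-\<alpha>) + C * (real M powr (1-\<alpha>) / (\<alpha>-1))"
      using Lq by linarith
    also have "\<dots> = C * (exp (-1) + 1/(\<alpha>-1)) * real M powr (1-\<alpha>)"
      by (simp add: distrib_left distrib_right)
    finally show ?thesis .
  qed
  finally show ?thesis .
qed




lemma powr_half_bound:
  fixes y B e :: real
  assumes "y > 0" "B > 0" "e \<ge> 0" "y / B \<le> z"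
  shows "z powr (-e) \<le> y powr (-e) * B powr e"
proof -
  have "z powr (-e) \<le> (y/B) powr (-e)" using assms by (intro powr_mono2') auto
  also have "(y/B) powr (-e) = y powr (-e) / B powr (-e)" by (rule powr_divide)
  also have "B powr (-e) = inverse (B powr e)" by (simp add: powr_minus)
  finally show ?thesis by (simp add: divide_inverse)
qed

theorem corollary4p3:
  fixes \<alpha> c C c\<^sub>0 :: real
  assumes "\<alpha> > 1" and "0 < c" and "c \<le> C" and "c\<^sub>0 > 0"
  shows "\<exists>N\<^sub>0 a\<^sub>1 a\<^sub>2 b\<^sub>1 b\<^sub>2. 0 < a\<^sub>1 \<and> 0 < a\<^sub>2 \<and> 0 < b\<^sub>1 \<and> 0 < b\<^sub>2 \<and>
    (\<forall>N K p. N \<ge> max 2 N\<^sub>0 \<longrightarrow> real K \<ge> c\<^sub>0 * real N \<longrightarrow> p \<in> task_simplex K \<longrightarrow>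
       (\<forall>k\<in>{1..K}. c * real k powr (-\<alpha>) \<le> p k \<and> p k \<le> C * real k powr (-\<alpha>)) \<longrightarrow>
       a\<^sub>1 * real N powr (-1 + 1/\<alpha>) \<le> L_same N K p \<and>
       L_same N K p \<le> a\<^sub>2 * real N powr (-1 + 1/\<alpha>) \<and>
       b\<^sub>1 * real N powr (-\<alpha> + 1) \<le> L_star N K p \<and>
       L_star N K p \<le> b\<^sub>2 * real N powr (-\<alpha> + 1))"
proof -
  note a = assms(1) and cp = assms(2) and cC = assms(3) and c0 = assms(4)
  have Cp: "C > 0" using cp cC by simp
  define d where "d = min c\<^sub>0 1"
  have d0: "d > 0" and d1: "d \<le> 1" and dc0: "d \<le> c\<^sub>0" unfolding d_def using c0 by auto
  define Ca where "Ca = C powr (1/\<alpha>)"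
  have Ca0: "Ca > 0" unfolding Ca_def using Cp by simp
  define B where "B = max (max (1/C) (2/d)) (max (2*(\<alpha>+1)) (4/c\<^sub>0))"
  have evB: "eventually (\<lambda>N. B \<le> real N) sequentially"
    using filterlim_real_sequentially unfolding filterlim_at_top by blast
  have "((\<lambda>N. real N powr (1/\<alpha> - 1)) \<longlongrightarrow> 0) sequentially"
    using a by (intro tendsto_neg_powr filterlim_real_sequentially) (simp add: field_simps)
  then have evP: "eventually (\<lambda>N. real N powr (1/\<alpha> - 1) < c\<^sub>0 / (4 * Ca)) sequentially"
    using c0 Ca0 by (intro order_tendstoD(2)) auto
  obtain N0 where N0: "\<And>N. N \<ge> N0 \<Longrightarrow> B \<le> real N \<and> real N powr (1/\<alpha> - 1) < c\<^sub>0 / (4 * Ca)"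
    using eventually_conj[OF evB evP] unfolding eventually_sequentially by blast
  define a1 where "a1 = c * exp (-2) * 2 powr (-\<alpha>) * 2 powr (1-\<alpha>) * C powr (-1+1/\<alpha>)"
  define a2 where "a2 = 1 + C * 2 powr (\<alpha>-1) / (\<alpha>-1)"
  define b1 where "b1 = c * exp (-2/d)"
  define b2 where "b2 = C * (exp (-1) + 1/(\<alpha>-1)) * (2*(\<alpha>+1)) powr (\<alpha>-1)"
  have pos12: "0 < a1" "0 < b1"
    unfolding a1_def b1_def using cp Cp a by auto
  have "0 \<le> C * 2 powr (\<alpha>-1) / (\<alpha>-1)" using Cp a by simp
  then have pos3: "0 < a2" unfolding a2_def by linarith
  have "0 < exp (-1) + 1/(\<alpha>-1)" using a by (intro add_pos_pos) auto
  moreover have "0 < (2*(\<alpha>+1)) powr (\<alpha>-1)" using a by simp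
  ultimately have pos4: "0 < b2" unfolding b2_def using Cp by simp
  note pos = pos12 pos3 pos4
  have main: "\<forall>N K p. N \<ge> max 2 N0 \<longrightarrow> real K \<ge> c\<^sub>0 * real N \<longrightarrow> p \<in> task_simplex K \<longrightarrow>
       (\<forall>k\<in>{1..K}. c * real k powr (-\<alpha>) \<le> p k \<and> p k \<le> C * real k powr (-\<alpha>)) \<longrightarrow>
       a1 * real N powr (-1 + 1/\<alpha>) \<le> L_same N K p \<and>
       L_same N K p \<le> a2 * real N powr (-1 + 1/\<alpha>) \<and>
       b1 * real N powr (-\<alpha> + 1) \<le> L_star N K p \<and>
       L_star N K p \<le> b2 * real N powr (-\<alpha> + 1)"
  proof (intro allI impI)
    fix N K p
    assume N: "max 2 N0 \<le> N" and K: "c\<^sub>0 * real N \<le> real K" and p: "p \<in> task_simplex K"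
      and pb: "\<forall>k\<in>{1..K}. c * real k powr (-\<alpha>) \<le> p k \<and> p k \<le> C * real k powr (-\<alpha>)"
    have N2: "N \<ge> 2" and NN0: "N \<ge> N0" using N by auto
    have Npos: "real N > 0" using N2 by simp
    have BN: "B \<le> real N" and PN: "real N powr (1/\<alpha> - 1) < c\<^sub>0 / (4 * Ca)" using N0[OF NN0] by auto
    have B1: "1/C \<le> real N" "2/d \<le> real N" "2*(\<alpha>+1) \<le> real N" "4/c\<^sub>0 \<le> real N"
      using BN unfolding B_def by auto
    have pbu: "\<forall>k\<in>{1..K}. p k \<le> C * real k powr (-\<alpha>)" and pbl: "\<forall>k\<in>{1..K}. c * real k powr (-\<alpha>) \<le> p k"
      using pb by auto
    define x where "x = (C * real N) powr (1/\<alpha>)"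
    have CN1: "C * real N \<ge> 1" using B1(1) Cp by (simp add: field_simps)
    have x1: "x \<ge> 1" unfolding x_def using CN1 a by (intro ge_one_powr_ge_zero) auto
    have xeq: "x = Ca * real N powr (1/\<alpha>)" unfolding x_def Ca_def using Cp Npos by (simp add: powr_mult)
    have Npw: "real N powr (1/\<alpha>) = real N powr (1/\<alpha> - 1) * real N"
    proof -
      have "real N powr (1/\<alpha> - 1 + 1) = real N powr (1/\<alpha> - 1) * real N powr 1" by (rule powr_add)
      then show ?thesis using Npos by simp
    qed
    have xK: "2 * (x + 1) \<le> real K"
    proof -
      have "2 * x = 2 * Ca * real N powr (1/\<alpha> - 1) * real N" using xeq Npw by simp
      also have "\<dots> \<le> 2 * Ca * (c\<^sub>0 / (4 * Ca)) * real N"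
        using PN Ca0 Npos by (intro mult_right_mono mult_left_mono) auto
      also have "\<dots> = c\<^sub>0 * real N / 2" using Ca0 by simp
      finally have "2 * x \<le> c\<^sub>0 * real N / 2" .
      moreover have "2 \<le> c\<^sub>0 * real N / 2" using B1(4) c0 by (simp add: field_simps)
      ultimately have "2 * x + 2 \<le> c\<^sub>0 * real N" by simp
      then show ?thesis using K by simp
    qed
    have SL: "c * exp (-2) * 2 powr (-\<alpha>) * (2 * x) powr (1-\<alpha>) \<le> L_same N K p"
      using same_lower[OF a cp cC N2 p pb] x1 xK unfolding x_def by blast
    have "(2 * x) powr (1-\<alpha>) = 2 powr (1-\<alpha>) * C powr (-1+1/\<alpha>) * real N powr (-1+1/\<alpha>)"
    proof -
      have e: "1/\<alpha> * (1-\<alpha>) = -1+1/\<alpha>" using a by (simp add: field_simps)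
      have "(2 * x) powr (1-\<alpha>) = 2 powr (1-\<alpha>) * x powr (1-\<alpha>)" using x1 by (simp add: powr_mult)
      also have "x powr (1-\<alpha>) = (C * real N) powr (-1+1/\<alpha>)" unfolding x_def using e by (simp add: powr_powr)
      also have "\<dots> = C powr (-1+1/\<alpha>) * real N powr (-1+1/\<alpha>)" using Cp Npos by (simp add: powr_mult)
      finally show ?thesis by simp
    qed
    with SL have g1: "a1 * real N powr (-1 + 1/\<alpha>) \<le> L_same N K p" unfolding a1_def by (simp add: ac_simps)
    have "L_same N K p \<le> a2 * real N powr (-1 + 1/\<alpha>)"
      unfolding a2_def using same_upper[OF a Cp _ p pbu] N2 by simp
    note g2 = this
    have "L_same N K p \<le> a2 * real N powr (-1 + 1/\<alpha>)"
      unfolding a2_def using same_upper[OF a Cp _ p pbu] N2 by simp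
    have dN: "d * real N \<ge> 2" using B1(2) d0 by (simp add: field_simps)
    have KdN: "real K \<ge> d * real N" using K dc0 Npos by (meson mult_right_mono less_imp_le order_trans)
    have NdN: "real N \<ge> d * real N" using d1 Npos by simp
    have mKN: "real (min K N) \<ge> d * real N" using KdN NdN by (simp add: min_def)
    have mKN2: "min K N \<ge> 2" using mKN dN by linarith
    have "b1 * real N powr (1-\<alpha>) \<le> L_star N K p"
      unfolding b1_def using star_lower[OF a cp _ p pbl d0 mKN2 mKN] N2 by simp
    then have g3: "b1 * real N powr (-\<alpha> + 1) \<le> L_star N K p" by (simp add: add.commute)
    define M where "M = nat \<lfloor>real N / (\<alpha>+1)\<rfloor>"
    have y2: "real N / (\<alpha>+1) \<ge> 2" using B1(3) a by (simp add: field_simps)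
    have M1: "M \<ge> 1" unfolding M_def using y2 by linarith
    have Mle: "real M \<le> real N / (\<alpha>+1)" unfolding M_def using y2 by linarith
    have Mge: "real M \<ge> real N / (\<alpha>+1) - 1" unfolding M_def using y2 by linarith
    have MN: "(\<alpha>+1) * real M \<le> real N" using Mle a by (simp add: field_simps)
    have K1: "K \<ge> 1" using mKN2 by simp
    have SU: "L_star N K p \<le> C * (exp (-1) + 1/(\<alpha>-1)) * real M powr (1-\<alpha>)"
      using star_upper[OF a Cp _ K1 p pbu M1 MN] N2 by simp
    have "real N / (2*(\<alpha>+1)) \<le> real M" using Mge y2 a by (simp add: field_simps)
    then have "real M powr (-(\<alpha>-1)) \<le> real N powr (-(\<alpha>-1)) * (2*(\<alpha>+1)) powr (\<alpha>-1)"
      using a Npos by (intro powr_half_bound) auto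
    then have "C * (exp (-1) + 1/(\<alpha>-1)) * real M powr (1-\<alpha>) \<le> C * (exp (-1) + 1/(\<alpha>-1)) * (real N powr (1-\<alpha>) * (2*(\<alpha>+1)) powr (\<alpha>-1))"
      using Cp a by (intro mult_left_mono) auto
    with SU have g4: "L_star N K p \<le> b2 * real N powr (-\<alpha> + 1)" unfolding b2_def by (simp add: ac_simps)
    show "a1 * real N powr (-1 + 1/\<alpha>) \<le> L_same N K p \<and>
       L_same N K p \<le> a2 * real N powr (-1 + 1/\<alpha>) \<and>
       b1 * real N powr (-\<alpha> + 1) \<le> L_star N K p \<and>
       L_star N K p \<le> b2 * real N powr (-\<alpha> + 1)" using g1 g2 g3 g4 by blast
  qed
  show ?thesis using pos main by blast
qed


end
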